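(* (a) There exists a tree-shift of finite type $X=\mathsf{X}_{\mathcal{F}}$, with $\mathcal{F}$ a finite set of patterns, which is strongly irreducible but not uniformly block gluing. (b) There exists a tree-shift which is uniformly block gluing but not strongly irreducible.
   Context: $\Sigma=\{0,1\}$. $\Sigma^*$ is the set of finite words, with $\epsilon$ the empty word. $|x|$ is the length of $x$, $\Sigma^k$ is the set of words of length $k$, and $\Sigma_n=\bigcup_{0\le k\le n}\Sigma^k$. A tree is $t:\Sigma^*\to\mathcal{A}$ with $\mathcal{A}$ finite, and we write $t_x=t(x)$. A pattern $u$ is a map on a finite prefix-closed support $S(u)$. A tree-shift is $\mathsf{X}_{\mathcal{F}}$, the set of trees in which no pattern of $\mathcal{F}$ occurs at any node. A pattern is accepted by $X$ if it occurs in some $t\in X$. $B_n(X)=\{t|_{\Sigma_{n-1}}:t\in X\}$. For $w\in\Sigma^*$, $t|_{wS(v)}=v$ means $t_{wy}=v_y$ for all $y\in S(v)$. A leaf of $u$ is $w\in S(u)$ with $w0,w1\notin S(u)$. A complete prefix code (CPC) is a finite set $P\subseteq\Sigma^*\setminus\{\epsilon\}$ such that no word of $P$ is a prefix of another, and every $x$ with $|x|\ge\max_{y\in P}|y|$ has a prefix in $P$. Patterns $u,v$ are connected through $P$ if there is $t\in X$ with $t|_{S(u)}=u$ and $t|_{wxS(v)}=v$ for every leaf $w$ of $u$ and every $x\in P$. $X$ is: - block gluing if there is a CPC $P$ such that for every $n\ge1$ any $u,v\in B_n(X)$ are connected through $P$; - uniformly block gluing if this holds with $P=\Sigma^k$ for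 some $k\ge1$; - strongly irreducible if there is a CPC $P$ through which any two patterns accepted by $X$ are connected; - uniformly strongly irreducible if this holds with $P=\Sigma^k$ for some $k\ge1$. *)

theory Defs
  imports Main "HOL-Library.Sublist"
begin

(* Sigma = {0,1} is represented by bool (False = 0, True = 1); words are bool lists,
   concatenation is @.
   A pattern is a partial map u :: bool list => nat option whose domain S(u) is its support. *)

type_synonym tree = "bool list \<Rightarrow> nat"
type_synonym pattern = "bool list \<Rightarrow> nat option"

definition is_tree :: "nat set \<Rightarrow> tree \<Rightarrow> bool" where
  "is_tree A t \<longleftrightarrow> (\<forall>x. t x \<in> A)"

definition is_pattern :: "nat set \<Rightarrow> pattern \<Rightarrow> bool" where
  "is_pattern A u \<longleftrightarrow> finite (dom u) \<and> dom u \<noteq> {} \<and>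
     (\<forall>x y. x @ y \<in> dom u \<longrightarrow> x \<in> dom u) \<and> ran u \<subseteq> A"

definition occurs_at :: "pattern \<Rightarrow> tree \<Rightarrow> bool list \<Rightarrow> bool" where
  "occurs_at u t w \<longleftrightarrow> (\<forall>y \<in> dom u. Some (t (w @ y)) = u y)"

definition tree_shift :: "nat set \<Rightarrow> pattern set \<Rightarrow> tree set" where
  "tree_shift A F = {t. is_tree A t \<and> (\<forall>u\<in>F. \<forall>w. \<not> occurs_at u t w)}"

definition accepted :: "tree set \<Rightarrow> pattern \<Rightarrow> bool" where
  "accepted X u \<longleftrightarrow> (\<exists>t\<in>X. \<exists>w. occurs_at u t w)"

definition restr :: "tree \<Rightarrow> bool list set \<Rightarrow> pattern" where
  "restr t S = (\<lambda>x. if x \<in> S then Some (t x) else None)"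

definition blocks :: "tree set \<Rightarrow> nat \<Rightarrow> pattern set" where
  "blocks X n = {restr t {x. length x \<le> n - 1} | t. t \<in> X}"

definition leaf :: "pattern \<Rightarrow> bool list \<Rightarrow> bool" where
  "leaf u w \<longleftrightarrow> w \<in> dom u \<and> w @ [False] \<notin> dom u \<and> w @ [True] \<notin> dom u"

definition complete_prefix_code :: "bool list set \<Rightarrow> bool" where
  "complete_prefix_code P \<longleftrightarrow> finite P \<and> P \<noteq> {} \<and> [] \<notin> P \<and>
     (\<forall>p\<in>P. \<forall>q\<in>P. prefix p q \<longrightarrow> p = q) \<and>
     (\<forall>x. length x \<ge> Max (length ` P) \<longrightarrow> (\<exists>p\<in>P. prefix p x))"

definition connected_through :: "tree set \<Rightarrow> bool list set \<Rightarrow> pattern \<Rightarrow> pattern \<Rightarrow> bool" where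
  "connected_through X P u v \<longleftrightarrow>
     (\<exists>t\<in>X. occurs_at u t [] \<and> (\<forall>w x. leaf u w \<longrightarrow> x \<in> P \<longrightarrow> occurs_at v t (w @ x)))"

definition block_gluing :: "tree set \<Rightarrow> bool" where
  "block_gluing X \<longleftrightarrow> (\<exists>P. complete_prefix_code P \<and>
     (\<forall>n\<ge>1. \<forall>u\<in>blocks X n. \<forall>v\<in>blocks X n. connected_through X P u v))"

definition uniformly_block_gluing :: "tree set \<Rightarrow> bool" where
  "uniformly_block_gluing X \<longleftrightarrow> (\<exists>k\<ge>1.
     (\<forall>n\<ge>1. \<forall>u\<in>blocks X n. \<forall>v\<in>blocks X n. connected_through X {x. length x = k} u v))"

definition strongly_irreducible :: "nat set \<Rightarrow> tree set \<Rightarrow> bool" where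
  "strongly_irreducible A X \<longleftrightarrow> (\<exists>P. complete_prefix_code P \<and>
     (\<forall>u v. is_pattern A u \<longrightarrow> is_pattern A v \<longrightarrow> accepted X u \<longrightarrow> accepted X v \<longrightarrow>
        connected_through X P u v))"

definition uniformly_strongly_irreducible :: "nat set \<Rightarrow> tree set \<Rightarrow> bool" where
  "uniformly_strongly_irreducible A X \<longleftrightarrow> (\<exists>k\<ge>1.
     (\<forall>u v. is_pattern A u \<longrightarrow> is_pattern A v \<longrightarrow> accepted X u \<longrightarrow> accepted X v \<longrightarrow>
        connected_through X {x. length x = k} u v))"

end

theory Submission
  imports Defs
begin

definition fa :: "nat \<Rightarrow> pattern" where
  "fa a = (\<lambda>x. if x \<in> {[],[False],[True]} then Some a else None)"
definition A0 :: "nat set" where "A0 = {0,1}"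
definition F0 :: "pattern set" where "F0 = {fa 0, fa 1}"

lemma dom_fa: "dom (fa a) = {[],[False],[True]}"
  by (auto simp: fa_def dom_def split: if_splits)

lemma occ_fa: "occurs_at (fa a) t w \<longleftrightarrow> t w = a \<and> t (w@[False]) = a \<and> t (w@[True]) = a"
  unfolding occurs_at_def dom_fa by (auto simp: fa_def)

lemma X0_iff: "t \<in> tree_shift A0 F0 \<longleftrightarrow>
   (\<forall>x. t x \<in> {0,1}) \<and> (\<forall>z. \<not>(t (z@[False]) = t z \<and> t (z@[True]) = t z))"
proof
  assume h: "t \<in> tree_shift A0 F0"
  hence v: "\<forall>x. t x \<in> {0,1}" by (auto simp: tree_shift_def is_tree_def A0_def)
  have "\<forall>z. \<not>(t (z@[False]) = t z \<and> t (z@[True]) = t z)"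
  proof (intro allI notI)
    fix z assume c: "t (z@[False]) = t z \<and> t (z@[True]) = t z"
    have "occurs_at (fa (t z)) t z" using c by (simp add: occ_fa)
    moreover have "fa (t z) \<in> F0" using v[rule_format, of z] by (auto simp: F0_def)
    ultimately show False using h by (auto simp: tree_shift_def)
  qed
  with v show "(\<forall>x. t x \<in> {0,1}) \<and> (\<forall>z. \<not>(t (z@[False]) = t z \<and> t (z@[True]) = t z))" by blast
next
  assume "(\<forall>x. t x \<in> {0,1}) \<and> (\<forall>z. \<not>(t (z@[False]) = t z \<and> t (z@[True]) = t z))"
  hence v: "\<forall>x. t x \<in> {0,1}" and n: "\<And>z. \<not>(t (z@[False]) = t z \<and> t (z@[True]) = t z)" by blast+
  have "\<forall>u\<in>F0. \<forall>w. \<not> occurs_at u t w"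
  proof (intro ballI allI notI)
    fix u w assume "u \<in> F0" "occurs_at u t w"
    then obtain a where "occurs_at (fa a) t w" by (auto simp: F0_def)
    hence "t (w@[False]) = t w \<and> t (w@[True]) = t w" by (simp add: occ_fa)
    thus False using n by blast
  qed
  thus "t \<in> tree_shift A0 F0" using v by (auto simp: tree_shift_def is_tree_def A0_def)
qed

lemma fa_pat: "is_pattern A0 (fa a) \<longleftrightarrow> a \<in> A0"
proof -
  have r: "ran (fa a) = {a}" by (auto simp: fa_def ran_def)
  have "\<forall>x y. x @ y \<in> {[],[False],[True]} \<longrightarrow> x \<in> {[],[False],[True]}"
    by (auto simp: append_eq_Cons_conv)
  thus ?thesis unfolding is_pattern_def dom_fa r by auto
qed

lemma shift_in: "t \<in> tree_shift A F \<Longrightarrow> (\<lambda>x. t (w@x)) \<in> tree_shift A F"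
  unfolding tree_shift_def is_tree_def occurs_at_def
  by (auto, metis append.assoc)

lemma accepted_root: "accepted (tree_shift A F) u \<Longrightarrow> \<exists>t\<in>tree_shift A F. occurs_at u t []"
  unfolding accepted_def
proof -
  assume "\<exists>t\<in>tree_shift A F. \<exists>w. occurs_at u t w"
  then obtain t w where "t \<in> tree_shift A F" "occurs_at u t w" by blast
  thus ?thesis
    by (intro bexI[of _ "\<lambda>x. t (w@x)"]) (auto simp: shift_in occurs_at_def)
qed

lemma parity:
  assumes "t \<in> tree_shift A0 F0"
  shows "\<exists>x. length x = k \<and> t (z@x) = (t z + k) mod 2"
proof (induction k)
  case 0
  have "t z \<in> {0,1}" using assms by (simp add: X0_iff)
  then show ?case by (intro exI[of _ "[]"]) auto
next
  case (Suc k)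
  then obtain x where x: "length x = k" "t (z@x) = (t z + k) mod 2" by blast
  have vals: "\<forall>y. t y \<in> {0,1}" and nf0: "\<forall>z. \<not>(t (z@[False]) = t z \<and> t (z@[True]) = t z)"
    using assms by (simp_all add: X0_iff)
  have nf: "\<not>(t ((z@x)@[False]) = t (z@x) \<and> t ((z@x)@[True]) = t (z@x))" using nf0 by blast
  then obtain b where b: "t (z@x@[b]) \<noteq> t (z@x)" by auto
  have "t (z@x@[b]) \<in> {0,1}" "t (z@x) \<in> {0,1}" using vals by auto
  hence "t (z@(x@[b])) = (t z + Suc k) mod 2" using b x(2) by auto presburger+
  thus ?case using x(1) by (intro exI[of _ "x@[b]"]) auto
qed


definition T0 :: tree where
  "T0 x = (case x of True # y \<Rightarrow> length y mod 2 | _ \<Rightarrow> length x mod 2)"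

lemma T0_in: "T0 \<in> tree_shift A0 F0"
  unfolding X0_iff
proof (intro conjI allI)
  fix x show "T0 x \<in> {0,1}" by (auto simp: T0_def split: list.splits bool.splits)
next
  fix z show "\<not>(T0 (z@[False]) = T0 z \<and> T0 (z@[True]) = T0 z)"
  proof (cases z)
    case Nil then show ?thesis by (simp add: T0_def)
  next
    case (Cons a r) then show ?thesis by (cases a) (auto simp: T0_def, presburger+)
  qed
qed

lemma dom_restr: "dom (restr t S) = S" by (auto simp: restr_def dom_def)

definition u0 :: pattern where "u0 = restr T0 {x. length x \<le> 1}"

lemma not_ubg: "\<not> uniformly_block_gluing (tree_shift A0 F0)"
proof
  assume "uniformly_block_gluing (tree_shift A0 F0)"
  then obtain k where k: "k \<ge> 1" and
    h: "\<forall>n\<ge>1. \<forall>u\<in>blocks (tree_shift A0 F0) n. \<forall>v\<in>blocks (tree_shift A0 F0) n.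
          connected_through (tree_shift A0 F0) {x. length x = k} u v"
    unfolding uniformly_block_gluing_def by blast
  have "u0 \<in> blocks (tree_shift A0 F0) 2" unfolding blocks_def u0_def using T0_in by auto
  hence "connected_through (tree_shift A0 F0) {x. length x = k} u0 u0" using h[rule_format, of 2 u0 u0] by simp
  then obtain t where t: "t \<in> tree_shift A0 F0" "occurs_at u0 t []"
    and g: "\<And>w x. leaf u0 w \<Longrightarrow> length x = k \<Longrightarrow> occurs_at u0 t (w @ x)"
    unfolding connected_through_def by auto
  have du: "dom u0 = {x. length x \<le> 1}" unfolding u0_def by (rule dom_restr)
  have lf: "leaf u0 [False]" "leaf u0 [True]" by (auto simp: leaf_def du)
  have uv: "\<And>y. y \<in> dom u0 \<Longrightarrow> u0 y = Some (T0 y)" unfolding du by (auto simp: u0_def restr_def)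
  have t1: "t [False] = 1" "t [True] = 0"
    using t(2) uv du unfolding occurs_at_def by (force simp: T0_def)+
  have root: "\<And>w x. leaf u0 w \<Longrightarrow> length x = k \<Longrightarrow> t (w @ x) = 0"
  proof -
    fix w x :: "bool list" assume "leaf u0 w" "length x = k"
    hence "occurs_at u0 t (w@x)" by (rule g)
    hence "Some (t ((w@x)@[])) = u0 []" unfolding occurs_at_def du by (metis (mono_tags) mem_Collect_eq list.size(3) le0)
    thus "t (w@x) = 0" using uv du by (simp add: T0_def)
  qed
  obtain x where x: "length x = k" "t ([False]@x) = (t [False] + k) mod 2" using parity[OF t(1)] by blast
  obtain x' where x': "length x' = k" "t ([True]@x') = (t [True] + k) mod 2" using parity[OF t(1)] by blast
  have "(1 + k) mod 2 = (0::nat)" using root[OF lf(1) x(1)] x(2) t1 by simp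
  moreover have "k mod 2 = (0::nat)" using root[OF lf(2) x'(1)] x'(2) t1 by simp
  ultimately show False by presburger
qed


definition P0 :: "bool list set" where "P0 = {[False],[True,False],[True,True]}"

lemma cpc_P0: "complete_prefix_code P0"
proof -
  have m: "Max (length ` P0) = 2" by (simp add: P0_def)
  have c: "\<forall>x. length x \<ge> 2 \<longrightarrow> (\<exists>p\<in>P0. prefix p x)"
  proof (intro allI impI)
    fix x :: "bool list" assume "length x \<ge> 2"
    then obtain a b r where x: "x = a # b # r"
      by (metis One_nat_def Suc_1 Suc_le_length_iff le_SucE nat.inject)
    show "\<exists>p\<in>P0. prefix p x" unfolding x P0_def by (cases a; cases b) auto
  qed
  show ?thesis unfolding complete_prefix_code_def m using c by (auto simp: P0_def)
qed

lemma leaf_uniq: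
  assumes pc: "\<forall>x y. x @ y \<in> dom u \<longrightarrow> x \<in> dom u"
    and l1: "leaf u w1" and l2: "leaf u w2" and p: "prefix w1 w2"
  shows "w1 = w2"
proof (rule ccontr)
  assume "w1 \<noteq> w2"
  with p obtain c r where "w2 = w1 @ c # r" by (auto simp: prefix_def) (metis list.exhaust)
  hence "(w1 @ [c]) @ r \<in> dom u" using l2 by (simp add: leaf_def)
  hence "w1 @ [c] \<in> dom u" using pc by blast
  thus False using l1 by (cases c) (auto simp: leaf_def)
qed

lemma leaf_uniq2:
  assumes pc: "\<forall>x y. x @ y \<in> dom u \<longrightarrow> x \<in> dom u"
    and l1: "leaf u w1" and l2: "leaf u w2" and p: "prefix w1 x" "prefix w2 x"
  shows "w1 = w2"
  using prefix_same_cases[OF p] leaf_uniq[OF pc l1 l2] leaf_uniq[OF pc l2 l1] by auto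

lemma no_strict_in_dom:
  assumes pc: "\<forall>x y. x @ y \<in> dom u \<longrightarrow> x \<in> dom u"
    and y: "y \<in> dom u" and l: "leaf u w" and s: "strict_prefix w y"
  shows False
proof -
  from s obtain c r where "y = w @ c # r"
    by (metis append_Nil2 neq_Nil_conv prefix_def prefix_order.le_less strict_prefix_def)
  hence "(w @ [c]) @ r \<in> dom u" using y by simp
  hence "w @ [c] \<in> dom u" using pc by blast
  thus False using l by (cases c) (auto simp: leaf_def)
qed

lemma si0: "strongly_irreducible A0 (tree_shift A0 F0)"
  unfolding strongly_irreducible_def
proof (intro exI[of _ P0] conjI allI impI)
  show "complete_prefix_code P0" by (rule cpc_P0)
next
  fix u v assume pu: "is_pattern A0 u" and pv: "is_pattern A0 v"
    and au: "accepted (tree_shift A0 F0) u" and av: "accepted (tree_shift A0 F0) v"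
  obtain tu where tu: "tu \<in> tree_shift A0 F0" "occurs_at u tu []" using accepted_root[OF au] by blast
  obtain tv where tv: "tv \<in> tree_shift A0 F0" "occurs_at v tv []" using accepted_root[OF av] by blast
  have pc: "\<forall>x y. x @ y \<in> dom u \<longrightarrow> x \<in> dom u" using pu by (simp add: is_pattern_def)
  have tuv: "\<forall>x. tu x \<in> {0,1}" "\<forall>z. \<not>(tu (z@[False]) = tu z \<and> tu (z@[True]) = tu z)"
    using tu(1) by (simp_all add: X0_iff)
  have tvv: "\<forall>x. tv x \<in> {0,1}" "\<forall>z. \<not>(tv (z@[False]) = tv z \<and> tv (z@[True]) = tv z)"
    using tv(1) by (simp_all add: X0_iff)
  define g where "g r = (if r = [True] then 1 - tv [] else if hd r then tv (drop 2 r) else tv (tl r))"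
    for r :: "bool list"
  define lw where "lw x = (THE w. leaf u w \<and> prefix w x)" for x :: "bool list"
  define t where "t x = (if \<exists>w. leaf u w \<and> strict_prefix w x then g (drop (length (lw x)) x) else tu x)"
    for x
  have lw_eq: "lw x = w" if "leaf u w" "prefix w x" for w x
    unfolding lw_def using that leaf_uniq2[OF pc] by (intro the_equality) blast+
  have t_out: "t x = tu x" if "\<not>(\<exists>w. leaf u w \<and> strict_prefix w x)" for x
    unfolding t_def using that by (rule if_not_P)
  have t_leaf: "t w = tu w" if "leaf u w" for w
  proof (rule t_out, rule notI)
    assume "\<exists>w'. leaf u w' \<and> strict_prefix w' w"
    then obtain w' where "leaf u w'" "strict_prefix w' w" by blast
    thus False using leaf_uniq[OF pc _ that, of w'] by (auto simp: strict_prefix_def)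
  qed
  have t_below: "t (w @ y) = g y" if "leaf u w" "y \<noteq> []" for w y
  proof -
    have s: "strict_prefix w (w@y)" using that(2) by (simp add: strict_prefix_def)
    have "lw (w@y) = w" using lw_eq[OF that(1)] by simp
    thus ?thesis using s that(1) by (auto simp: t_def)
  qed
  have g_val: "g y \<in> {0,1}" for y using tvv(1) by (auto simp: g_def)
  have t_in: "t \<in> tree_shift A0 F0"
    unfolding X0_iff
  proof (intro conjI allI)
    fix x show "t x \<in> {0,1}" using tuv(1) g_val by (simp add: t_def)
  next
    fix z show "\<not>(t (z@[False]) = t z \<and> t (z@[True]) = t z)"
    proof (cases "\<exists>w. leaf u w \<and> prefix w z")
      case True
      then obtain w y where w: "leaf u w" and z: "z = w @ y" by (auto simp: prefix_def)
      have tc: "t (z@[b]) = g (y@[b])" for b using t_below[OF w, of "y@[b]"] z by simp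
      show ?thesis
      proof (cases y)
        case Nil
        have "t z = tu w" using t_leaf[OF w] z Nil by simp
        moreover have "g [False] = tv []" "g [True] = 1 - tv []" by (simp_all add: g_def)
        ultimately show ?thesis using tc Nil tvv(1)[rule_format, of "[]"] by auto
      next
        case (Cons a r)
        have tz: "t z = g y" using t_below[OF w] z Cons by simp
        show ?thesis
        proof (cases "y = [True]")
          case True
          have "g [True,False] = tv []" "g [True,True] = tv []" "g [True] = 1 - tv []"
            by (simp_all add: g_def)
          thus ?thesis using tc tz True tvv(1)[rule_format, of "[]"] by auto
        next
          case False
          obtain r' where "\<And>b. g (y@[b]) = tv (r'@[b])" "g y = tv r'"
          proof (cases a)
            case True
            with Cons False obtain c r2 where "y = True # c # r2" by (cases r) auto
            thus ?thesis using that by (auto simp: g_def)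
          next
            case a: False
            thus ?thesis using that Cons by (auto simp: g_def)
          qed
          thus ?thesis using tc tz tvv(2) by metis
        qed
      qed
    next
      case False
      have "\<not>(\<exists>w. leaf u w \<and> strict_prefix w (z@[b]))" for b
      proof
        assume "\<exists>w. leaf u w \<and> strict_prefix w (z@[b])"
        then obtain w where "leaf u w" "strict_prefix w (z@[b])" by blast
        hence "prefix w z" using prefix_snoc by (auto simp: strict_prefix_def)
        thus False using False \<open>leaf u w\<close> by blast
      qed
      moreover have "\<not>(\<exists>w. leaf u w \<and> strict_prefix w z)" using False
        by (auto simp: strict_prefix_def)
      ultimately show ?thesis using t_out tuv(2) by metis
    qed
  qed
  show "connected_through (tree_shift A0 F0) P0 u v"
    unfolding connected_through_def
  proof (intro bexI[OF _ t_in] conjI allI impI)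
    show "occurs_at u t []"
      unfolding occurs_at_def
    proof
      fix y assume y: "y \<in> dom u"
      have "t y = tu y" using no_strict_in_dom[OF pc y] by (intro t_out) blast
      thus "Some (t ([] @ y)) = u y" using tu(2) y by (simp add: occurs_at_def)
    qed
  next
    fix w x assume w: "leaf u w" and x: "x \<in> P0"
    show "occurs_at v t (w @ x)"
      unfolding occurs_at_def
    proof
      fix y assume y: "y \<in> dom v"
      have "x \<noteq> []" using x by (auto simp: P0_def)
      hence "t (w @ x @ y) = g (x @ y)" using t_below[OF w] by simp
      also have "\<dots> = tv y" using x by (auto simp: P0_def g_def)
      finally show "Some (t ((w @ x) @ y)) = v y" using tv(2) y by (simp add: occurs_at_def)
    qed
  qed
qed


definition F1 :: "pattern set" where
  "F1 = {u. is_pattern A0 u \<and> (\<exists>x y. x \<in> dom u \<and> y \<in> dom u \<and> length x = length y \<and> u x \<noteq> u y)}"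

lemma ran_restr: "\<forall>x. t x \<in> A \<Longrightarrow> ran (restr t S) \<subseteq> A"
  unfolding ran_def restr_def by (auto split: if_split_asm)

lemma lc_in:
  assumes "\<forall>x. t x \<in> A0" "\<forall>x y. length x = length y \<longrightarrow> t x = t y"
  shows "t \<in> tree_shift A0 F1"
proof -
  have "\<not> occurs_at u t w" if "u \<in> F1" for u w
  proof
  assume "occurs_at u t w"
  with that obtain x y where "x \<in> dom u" "y \<in> dom u" "length x = length y" "u x \<noteq> u y"
    unfolding F1_def by blast
  moreover have "length (w@x) = length (w@y)" using \<open>length x = length y\<close> by simp
  ultimately show False using \<open>occurs_at u t w\<close> assms(2) unfolding occurs_at_def by metis
  qed
  thus ?thesis using assms(1) by (auto simp: tree_shift_def is_tree_def)
qed

lemma in_lc: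
  assumes t: "t \<in> tree_shift A0 F1" and l: "length x = length y"
  shows "t x = t y"
proof (rule ccontr)
  assume ne: "t x \<noteq> t y"
  define S where "S = {z. prefix z x \<or> prefix z y}"
  define u where "u = restr t S"
  have dS: "dom u = S" unfolding u_def by (rule dom_restr)
  have fin: "finite S"
  proof -
    have "S \<subseteq> set (prefixes x) \<union> set (prefixes y)" by (auto simp: S_def)
    thus ?thesis by (rule finite_subset) simp
  qed
  have vals: "\<forall>z. t z \<in> A0" using t by (simp add: tree_shift_def is_tree_def)
  have "is_pattern A0 u" unfolding is_pattern_def dS
  proof (intro conjI)
    show "finite S" by (rule fin)
    show "S \<noteq> {}" by (auto simp: S_def)
    show "\<forall>a b. a @ b \<in> S \<longrightarrow> a \<in> S"
      by (auto simp: S_def prefix_def)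
    show "ran u \<subseteq> A0" unfolding u_def by (rule ran_restr[OF vals])
  qed
  moreover have "x \<in> S" "y \<in> S" by (auto simp: S_def)
  moreover have "u x \<noteq> u y" using ne \<open>x \<in> S\<close> \<open>y \<in> S\<close> by (simp add: u_def restr_def)
  ultimately have "u \<in> F1" unfolding F1_def using dS l by blast
  moreover have "occurs_at u t []" unfolding occurs_at_def dS by (simp add: u_def restr_def)
  ultimately show False using t by (auto simp: tree_shift_def)
qed

lemma ubg1: "uniformly_block_gluing (tree_shift A0 F1)"
  unfolding uniformly_block_gluing_def
proof (intro exI[of _ 1] conjI allI impI ballI)
  fix n :: nat and u v assume n: "n \<ge> 1" and u: "u \<in> blocks (tree_shift A0 F1) n"
    and v: "v \<in> blocks (tree_shift A0 F1) n"
  define B where "B = {x :: bool list. length x \<le> n - 1}"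
  obtain tu where tu: "tu \<in> tree_shift A0 F1" "u = restr tu B" using u by (auto simp: blocks_def B_def)
  obtain tv where tv: "tv \<in> tree_shift A0 F1" "v = restr tv B" using v by (auto simp: blocks_def B_def)
  define t where "t x = (if length x \<le> n - 1 then tu x else tv (drop n x))" for x :: "bool list"
  have t_in: "t \<in> tree_shift A0 F1"
  proof (rule lc_in)
    show "\<forall>x. t x \<in> A0" using tu(1) tv(1) by (simp add: t_def tree_shift_def is_tree_def)
    show "\<forall>x y. length x = length y \<longrightarrow> t x = t y"
    proof (intro allI impI)
      fix x y :: "bool list" assume l: "length x = length y"
      have "tu x = tu y" by (rule in_lc[OF tu(1) l])
      moreover have "tv (drop n x) = tv (drop n y)" by (rule in_lc[OF tv(1)]) (simp add: l)
      ultimately show "t x = t y" using l by (simp add: t_def)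
    qed
  qed
  show "connected_through (tree_shift A0 F1) {x. length x = 1} u v"
    unfolding connected_through_def
  proof (intro bexI[OF _ t_in] conjI allI impI)
    show "occurs_at u t []" unfolding occurs_at_def tu(2) dom_restr by (simp add: B_def restr_def t_def)
  next
    fix w x assume w: "leaf u w" and x: "x \<in> {x :: bool list. length x = 1}"
    have "w \<in> B" "w @ [False] \<notin> B" using w unfolding leaf_def tu(2) dom_restr by auto
    hence lw: "length w = n - 1" by (auto simp: B_def)
    show "occurs_at v t (w @ x)"
      unfolding occurs_at_def
    proof
      fix y assume "y \<in> dom v"
      have "length (w @ x) = n" using lw x n by simp
      hence "t ((w @ x) @ y) = tv y" using n by (simp add: t_def; linarith)
      thus "Some (t ((w @ x) @ y)) = v y" using \<open>y \<in> dom v\<close>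
        unfolding tv(2) dom_restr by (simp add: restr_def)
    qed
  qed
qed simp

lemma not_si1: "\<not> strongly_irreducible A0 (tree_shift A0 F1)"
proof
  assume "strongly_irreducible A0 (tree_shift A0 F1)"
  then obtain P where P: "complete_prefix_code P" and
    h: "\<And>u v. is_pattern A0 u \<Longrightarrow> is_pattern A0 v \<Longrightarrow> accepted (tree_shift A0 F1) u \<Longrightarrow>
       accepted (tree_shift A0 F1) v \<Longrightarrow> connected_through (tree_shift A0 F1) P u v"
    unfolding strongly_irreducible_def by blast
  obtain p where p: "p \<in> P" using P by (auto simp: complete_prefix_code_def)
  define c0 :: tree where "c0 = (\<lambda>_. 0)"
  define c1 :: tree where "c1 = (\<lambda>x. length x mod 2)"
  define D where "D = {[],[False],[True],[False,False]}"
  define E where "E = {[],[False],[True]}"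
  define u where "u = restr c0 D"
  define v where "v = restr c1 E"
  have c0i: "c0 \<in> tree_shift A0 F1" by (rule lc_in) (auto simp: c0_def A0_def)
  have c1i: "c1 \<in> tree_shift A0 F1" by (rule lc_in) (auto simp: c1_def A0_def)
  note rr = ran_restr
  have pu: "is_pattern A0 u" unfolding is_pattern_def u_def dom_restr
  proof (intro conjI rr)
    show "\<forall>x y. x @ y \<in> D \<longrightarrow> x \<in> D" by (auto simp: D_def append_eq_Cons_conv)
  qed (auto simp: D_def c0_def A0_def)
  have pv: "is_pattern A0 v" unfolding is_pattern_def v_def dom_restr
  proof (intro conjI rr)
    show "\<forall>x y. x @ y \<in> E \<longrightarrow> x \<in> E" by (auto simp: E_def append_eq_Cons_conv)
  qed (auto simp: E_def c1_def A0_def)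
  have au: "accepted (tree_shift A0 F1) u" unfolding accepted_def
    using c0i unfolding occurs_at_def u_def dom_restr by (intro bexI[of _ c0] exI[of _ "[]"]) (simp_all add: restr_def)
  have av: "accepted (tree_shift A0 F1) v" unfolding accepted_def
    using c1i unfolding occurs_at_def v_def dom_restr by (intro bexI[of _ c1] exI[of _ "[]"]) (simp_all add: restr_def)
  obtain t where t: "t \<in> tree_shift A0 F1"
    and g: "\<And>w x. leaf u w \<Longrightarrow> x \<in> P \<Longrightarrow> occurs_at v t (w @ x)"
    using h[OF pu pv au av] unfolding connected_through_def by blast
  have l1: "leaf u [True]" "leaf u [False,False]"
    by (auto simp: leaf_def u_def dom_restr D_def)
  have "Some (t (([True] @ p) @ [False])) = v [False]"
    using g[OF l1(1) p] by (auto simp: occurs_at_def v_def dom_restr E_def)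
  hence a: "t (True # p @ [False]) = 1" by (simp add: v_def restr_def E_def c1_def)
  have "Some (t (([False,False] @ p) @ [])) = v []"
    using g[OF l1(2) p] by (auto simp: occurs_at_def v_def dom_restr E_def)
  hence b: "t (False # False # p) = 0" by (simp add: v_def restr_def E_def c1_def)
  have "t (True # p @ [False]) = t (False # False # p)" by (rule in_lc[OF t]) simp
  with a b show False by simp
qed

theorem proposition3p8:
  shows "(\<exists>A F. finite A \<and> finite F \<and> (\<forall>u\<in>F. is_pattern A u) \<and>
            strongly_irreducible A (tree_shift A F) \<and>
            \<not> uniformly_block_gluing (tree_shift A F))
       \<and> (\<exists>A F. finite A \<and> (\<forall>u\<in>F. is_pattern A u) \<and>
            uniformly_block_gluing (tree_shift A F) \<and>
            \<not> strongly_irreducible A (tree_shift A F))"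
proof (intro conjI)
  show "\<exists>A F. finite A \<and> finite F \<and> (\<forall>u\<in>F. is_pattern A u) \<and>
            strongly_irreducible A (tree_shift A F) \<and>
            \<not> uniformly_block_gluing (tree_shift A F)"
  proof (intro exI[of _ A0] exI[of _ F0] conjI si0 not_ubg)
    show "finite A0" "finite F0" by (simp_all add: A0_def F0_def)
    show "\<forall>u\<in>F0. is_pattern A0 u" unfolding F0_def by (auto simp: fa_pat, auto simp: A0_def)
  qed
  show "\<exists>A F. finite A \<and> (\<forall>u\<in>F. is_pattern A u) \<and>
            uniformly_block_gluing (tree_shift A F) \<and>
            \<not> strongly_irreducible A (tree_shift A F)"
  proof (intro exI[of _ A0] exI[of _ F1] conjI ubg1 not_si1)
    show "finite A0" by (simp add: A0_def)
    show "\<forall>u\<in>F1. is_pattern A0 u" by (auto simp: F1_def)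
  qed
qed

end
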